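(* Let $\mathbf{Z}=\{\mathbf{z}_i\}_{i=1}^n$ be a $G$-networked sample and let $\xi$ be a function on $\mathcal{Z}$ with mean $\mathbf{E}(\xi)=\mu$, variance $\sigma^2(\xi)=\sigma^2$, and satisfying $|\xi(\mathbf{z})-\mu|\le M$ for $\rho$-almost all $\mathbf{z}\in\mathcal{Z}$. If $\mathbf{w}$ is an optimal weighting of $G$ and $\mathsf{s}=\mathsf{s}(G)$, then for all $\epsilon>0$, $$\Pr\Big(\frac{1}{\mathsf{s}}\sum_{i=1}^n w_i\,\xi(\mathbf{z}_i)-\mu\ge\epsilon\Big)\le\exp\Big(-\frac{\mathsf{s}\,\epsilon^2}{2(\sigma^2+\frac13 M\epsilon)}\Big).$$
   Context: Networked setting: $G$ is a $k$-partite hypergraph with hyperedges $e_1,\dots,e_n$; its vertex set is partitioned into $V^{(1)},\dots,V^{(k)}$ and each hyperedge contains exactly one vertex $e^{(j)}$ of each $V^{(j)}$. $\mathcal{X}=\mathcal{X}^{(1)}\times\cdots\times\mathcal{X}^{(k)}$ (compact metric spaces), $\mathcal{Y}=\mathbb{R}$, $\mathcal{Z}=\mathcal{X}\times\mathcal{Y}$. Each vertex $v\in V^{(j)}$ gets a feature $\phi(v)\in\mathcal{X}^{(j)}$ drawn independently from $\rho_j$, independently of the hypergraph. Hyperedge $e_i$ yields $\mathbf{z}_i=(\mathbf{x}_i,y_i)$, $\mathbf{x}_i=(\phi(e_i^{(1)}),\dots,\phi(e_i^{(k)}))$, with labels conditionally independent given all features, $y_i\sim\rho_{y|\mathbf{x}}(\cdot\mid\mathbf{x}_i)$.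 $\rho=\rho_{y|\mathbf{x}}\rho_{\mathbf{x}}$ with $\rho_{\mathbf{x}}=\prod_j\rho_j$; mean and variance of $\xi$ are with respect to $\rho$. $\mathbf{Z}$ is the $G$-networked sample. A feasible weighting is $\mathbf{w}=(w_1,\dots,w_n)$ with $w_i\ge0$ and $\sum_{i:\,v\in e_i}w_i\le1$ for every vertex $v$. $\mathsf{s}(G)$ is the maximum of $\sum_i w_i$ over feasible weightings, and an optimal weighting is a feasible weighting attaining this maximum. *)

theory Defs
  imports "HOL-Probability.Probability"
begin

text \<open>
  Vertices of part j (j < k) form the finite set V j of
  vertex names of type 'v; a vertex of G is a pair (j, v) with v in V j.
  The hyperedges are e 0, ..., e (n-1); hyperedge e i contains exactly the
  vertex (j, e i j) of part j, for every j < k.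
\<close>

definition k_partite_hypergraph ::
  "nat \<Rightarrow> (nat \<Rightarrow> 'v set) \<Rightarrow> nat \<Rightarrow> (nat \<Rightarrow> nat \<Rightarrow> 'v) \<Rightarrow> bool" where
  "k_partite_hypergraph k V n e \<longleftrightarrow>
     (\<forall>j<k. finite (V j)) \<and>
     (\<forall>i<n. \<forall>j<k. e i j \<in> V j) \<and>
     (\<forall>i<n. \<forall>i'<n. i \<noteq> i' \<longrightarrow> (\<exists>j<k. e i j \<noteq> e i' j))"

definition feasible_weighting ::
  "nat \<Rightarrow> (nat \<Rightarrow> 'v set) \<Rightarrow> nat \<Rightarrow> (nat \<Rightarrow> nat \<Rightarrow> 'v) \<Rightarrow> (nat \<Rightarrow> real) \<Rightarrow> bool" where
  "feasible_weighting k V n e w \<longleftrightarrow>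
     (\<forall>i<n. 0 \<le> w i) \<and>
     (\<forall>j<k. \<forall>v\<in>V j. (\<Sum>i\<in>{i. i < n \<and> e i j = v}. w i) \<le> 1)"

definition s_G ::
  "nat \<Rightarrow> (nat \<Rightarrow> 'v set) \<Rightarrow> nat \<Rightarrow> (nat \<Rightarrow> nat \<Rightarrow> 'v) \<Rightarrow> real" where
  "s_G k V n e = Sup {(\<Sum>i<n. w i) | w. feasible_weighting k V n e w}"

definition optimal_weighting ::
  "nat \<Rightarrow> (nat \<Rightarrow> 'v set) \<Rightarrow> nat \<Rightarrow> (nat \<Rightarrow> nat \<Rightarrow> 'v) \<Rightarrow> (nat \<Rightarrow> real) \<Rightarrow> bool" where
  "optimal_weighting k V n e w \<longleftrightarrow>
     feasible_weighting k V n e w \<and> (\<Sum>i<n. w i) = s_G k V n e"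

definition X_space :: "nat \<Rightarrow> (nat \<Rightarrow> 'x measure) \<Rightarrow> (nat \<Rightarrow> 'x) measure" where
  "X_space k \<rho>j = PiM {..<k} \<rho>j"

definition Z_space :: "nat \<Rightarrow> (nat \<Rightarrow> 'x measure) \<Rightarrow> ((nat \<Rightarrow> 'x) \<times> real) measure" where
  "Z_space k \<rho>j = X_space k \<rho>j \<Otimes>\<^sub>M borel"

text \<open>rho = rho_{y|x} rho_x, with rho_x the product of the rho_j and
  K x = rho_{y|x}(. | x) a Markov kernel.\<close>

definition rho_joint ::
  "nat \<Rightarrow> (nat \<Rightarrow> 'x measure) \<Rightarrow> ((nat \<Rightarrow> 'x) \<Rightarrow> real measure) \<Rightarrow> ((nat \<Rightarrow> 'x) \<times> real) measure" where
  "rho_joint k \<rho>j K =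
     X_space k \<rho>j \<bind> (\<lambda>x. distr (K x) (Z_space k \<rho>j) (\<lambda>y. (x, y)))"

definition edge_features ::
  "nat \<Rightarrow> (nat \<Rightarrow> nat \<Rightarrow> 'v) \<Rightarrow> (nat \<times> 'v \<Rightarrow> 'x) \<Rightarrow> nat \<Rightarrow> (nat \<Rightarrow> 'x)" where
  "edge_features k e \<phi> i = (\<lambda>j\<in>{..<k}. \<phi> (j, e i j))"

text \<open>Law of the G-networked sample (z_0, ..., z_(n-1)): the vertex features
  phi(j,v) are independent with law rho_j; given all features, the labels
  are independent with y_i ~ K(x_i).\<close>

definition networked_sample_law ::
  "nat \<Rightarrow> (nat \<Rightarrow> 'v set) \<Rightarrow> nat \<Rightarrow> (nat \<Rightarrow> nat \<Rightarrow> 'v) \<Rightarrow> (nat \<Rightarrow> 'x measure)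
   \<Rightarrow> ((nat \<Rightarrow> 'x) \<Rightarrow> real measure) \<Rightarrow> (nat \<Rightarrow> (nat \<Rightarrow> 'x) \<times> real) measure" where
  "networked_sample_law k V n e \<rho>j K =
     PiM (SIGMA j:{..<k}. V j) (\<lambda>(j, v). \<rho>j j) \<bind>
       (\<lambda>\<phi>. PiM {..<n} (\<lambda>i. distr (K (edge_features k e \<phi> i)) (Z_space k \<rho>j)
                               (\<lambda>y. (edge_features k e \<phi> i, y))))"

end

theory Submission
  imports Defs
begin

lemma fact_ge_pow3: "2 * 3 ^ n \<le> (fact (n + 2) :: real)"
proof (induction n)
  case 0 then show ?case by (simp add: numeral_2_eq_2)
next
  case (Suc n)
  have "fact (Suc n + 2) = (real (n+3)) * (fact (n + 2)::real)"
    by (simp add: numeral_3_eq_3 numeral_2_eq_2 algebra_simps)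
  moreover have "(3::real) \<le> real (n+3)" by simp
  ultimately have "3 * (fact (n+2)::real) \<le> fact (Suc n + 2)"
    by (metis fact_ge_zero mult_right_mono)
  moreover have "2 * 3 ^ Suc n = 3 * (2 * (3::real) ^ n)" by simp
  ultimately show ?case using Suc by linarith
qed

lemma exp_le_pos:
  fixes t :: real assumes "0 \<le> t" "t < 3"
  shows "exp t \<le> 1 + t + t^2 / (2 * (1 - t/3))"
proof -
  have s1: "(\<lambda>n. t^n / fact n) sums exp t"
    using exp_converges[of t] by (simp add: divide_inverse mult.commute scaleR_conv_of_real)
  hence s2: "(\<lambda>n. t^(n+2) / fact (n+2)) sums (exp t - (\<Sum>i<2. t^i / fact i))"
    by (subst sums_iff_shift) simp
  have g: "(\<lambda>n. (t/3)^n) sums (1 / (1 - t/3))"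
    by (rule geometric_sums) (use assms in simp)
  hence g2: "(\<lambda>n. t^2/2 * (t/3)^n) sums (t^2/2 * (1 / (1 - t/3)))"
    by (rule sums_mult)
  have le: "t^(n+2) / fact (n+2) \<le> t^2/2 * (t/3)^n" for n
  proof -
    have "t^(n+2) / fact (n+2) \<le> t^(n+2) / (2 * 3^n)"
      by (rule divide_left_mono) (use assms fact_ge_pow3[of n] in auto)
    also have "\<dots> = t^2/2 * (t/3)^n" by (simp add: power_add power_divide field_simps power2_eq_square)
    finally show ?thesis .
  qed
  have "exp t - (\<Sum>i<2. t^i / fact i) \<le> t^2/2 * (1 / (1 - t/3))"
    by (rule sums_le[OF le s2 g2])
  moreover have "(\<Sum>i<2. t^i / fact i) = 1 + t" by (simp add: numeral_2_eq_2)
  ultimately show ?thesis by simp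
qed

lemma exp_le_neg:
  fixes t :: real assumes "t \<le> 0"
  shows "exp t \<le> 1 + t + t^2 / 2"
proof -
  obtain u where u: "exp t = (\<Sum>m<3. (t ^ m) / fact m) + (exp u / fact 3) * t ^ 3"
    using Maclaurin_exp_le[of t 3] by blast
  have "t^3 = t * t^2" by (simp add: power3_eq_cube power2_eq_square)
  hence "t^3 \<le> 0" using assms by (simp add: mult_nonpos_nonneg)
  hence "(exp u / fact 3) * t ^ 3 \<le> 0" by (intro mult_nonneg_nonpos) auto
  moreover have "(\<Sum>m<3. (t ^ m) / fact m) = 1 + t + t^2/2"
    by (simp add: numeral_3_eq_3 numeral_2_eq_2 fact_numeral)
  ultimately show ?thesis using u by simp
qed

lemma exp_bern:
  fixes t c :: real assumes "0 \<le> c" "c < 3" "t \<le> c"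
  shows "exp t \<le> 1 + t + t^2 / (2 * (1 - c/3))"
proof (cases "t \<le> 0")
  case True
  have "t^2/2 \<le> t^2 / (2 * (1 - c/3))"
    by (rule divide_left_mono) (use assms in auto)
  then show ?thesis using exp_le_neg[OF True] by linarith
next
  case False
  have "exp t \<le> 1 + t + t^2 / (2 * (1 - t/3))" by (rule exp_le_pos) (use False assms in auto)
  also have "t^2 / (2 * (1 - t/3)) \<le> t^2 / (2 * (1 - c/3))"
    by (rule divide_left_mono) (use assms False in auto)
  finally show ?thesis by simp
qed

lemma amgm_slack:
  fixes x w :: "'i \<Rightarrow> real"
  assumes B: "finite B" and x: "\<And>i. i \<in> B \<Longrightarrow> 0 < x i"
    and w: "\<And>i. i \<in> B \<Longrightarrow> 0 \<le> w i" and sw: "(\<Sum>i\<in>B. w i) \<le> 1"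
  shows "(\<Prod>i\<in>B. x i powr w i) \<le> (\<Sum>i\<in>B. w i * x i) + (1 - (\<Sum>i\<in>B. w i))"
proof -
  define S where "S = insert None (Some ` B)"
  define a where "a = (\<lambda>j. case j of None \<Rightarrow> 1 - (\<Sum>i\<in>B. w i) | Some i \<Rightarrow> w i)"
  define y where "y = (\<lambda>j. case j of None \<Rightarrow> 0 | Some i \<Rightarrow> ln (x i))"
  have nin: "None \<notin> Some ` B" by auto
  have fS: "finite S" using B by (simp add: S_def)
  have sumS: "\<And>g. (\<Sum>j\<in>S. g j) = g None + (\<Sum>i\<in>B. g (Some i))"
    using B nin by (simp add: S_def sum.reindex)
  have "exp (\<Sum>j\<in>S. a j *\<^sub>R y j) \<le> (\<Sum>j\<in>S. a j * exp (y j))"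
  proof (rule convex_on_sum[OF fS _ exp_convex])
    show "S \<noteq> {}" by (simp add: S_def)
    show "(\<Sum>j\<in>S. a j) = 1" by (simp add: sumS a_def)
    show "\<And>j. j \<in> S \<Longrightarrow> 0 \<le> a j" using sw w by (auto simp: S_def a_def)
  qed auto
  moreover have "(\<Sum>j\<in>S. a j *\<^sub>R y j) = (\<Sum>i\<in>B. w i * ln (x i))"
    by (simp add: sumS a_def y_def)
  moreover have "(\<Sum>j\<in>S. a j * exp (y j)) = (\<Sum>i\<in>B. w i * x i) + (1 - (\<Sum>i\<in>B. w i))"
    using x by (simp add: sumS a_def y_def)
  moreover have "exp (\<Sum>i\<in>B. w i * ln (x i)) = (\<Prod>i\<in>B. x i powr w i)"
    using B x by (auto simp: exp_sum powr_def mult.commute intro!: prod.cong) (metis less_irrefl)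
  ultimately show ?thesis by simp
qed

lemma holder_slack:
  fixes f :: "'i \<Rightarrow> 'a \<Rightarrow> real" and w :: "'i \<Rightarrow> real"
  assumes N: "prob_space N" and B: "finite B"
    and meas: "\<And>i. i \<in> B \<Longrightarrow> f i \<in> borel_measurable N"
    and bnd: "\<And>i y. i \<in> B \<Longrightarrow> y \<in> space N \<Longrightarrow> a \<le> f i y \<and> f i y \<le> b"
    and a: "0 < a"
    and w: "\<And>i. i \<in> B \<Longrightarrow> 0 \<le> w i" and sw: "(\<Sum>i\<in>B. w i) \<le> 1"
  shows "(\<integral>y. (\<Prod>i\<in>B. f i y powr w i) \<partial>N) \<le> (\<Prod>i\<in>B. (\<integral>y. f i y \<partial>N) powr w i)"
proof -
  interpret prob_space N by fact
  have fpos: "0 < f i y" if "i \<in> B" "y \<in> space N" for i y using bnd[OF that] a by linarith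
  have int: "integrable N (f i)" if "i \<in> B" for i
    by (rule integrable_const_bound[where B=b])
       (use that bnd a meas in \<open>force intro!: AE_I2\<close>)+
  define U where "U i = (\<integral>y. f i y \<partial>N)" for i
  have U: "a \<le> U i" if "i \<in> B" for i
    unfolding U_def
    by (rule integral_ge_const) (use that int bnd in \<open>auto intro!: AE_I2\<close>)
  define P where "P = (\<Prod>i\<in>B. U i powr w i)"
  have Upos: "0 < U i" if "i \<in> B" for i using U[OF that] a by linarith
  have P: "0 < P" unfolding P_def by (intro prod_pos) (metis Upos less_irrefl powr_gt_zero)
  have pw: "(\<Prod>i\<in>B. f i y powr w i) \<le> P * ((\<Sum>i\<in>B. w i * (f i y / U i)) + (1 - (\<Sum>i\<in>B. w i)))"
    if y: "y \<in> space N" for y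
  proof -
    have "(\<Prod>i\<in>B. (f i y / U i) powr w i) \<le> (\<Sum>i\<in>B. w i * (f i y / U i)) + (1 - (\<Sum>i\<in>B. w i))"
    proof (rule amgm_slack[OF B _ w sw])
      fix i assume i: "i \<in> B"
      have "0 < f i y" using bnd[OF i y] a by linarith
      then show "0 < f i y / U i" using Upos[OF i] by simp
    qed
    moreover have "(\<Prod>i\<in>B. (f i y / U i) powr w i) = (\<Prod>i\<in>B. f i y powr w i / U i powr w i)"
    proof (rule prod.cong)
      fix i assume i: "i \<in> B"
      have "0 \<le> f i y" using bnd[OF i y] a by linarith
      moreover have "0 \<le> U i" using U[OF i] a by linarith
      ultimately show "(f i y / U i) powr w i = f i y powr w i / U i powr w i"
        by (simp only: powr_divide)
    qed simp
    moreover have "(\<Prod>i\<in>B. f i y powr w i / U i powr w i) = (\<Prod>i\<in>B. f i y powr w i) / P"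
      unfolding P_def by (rule prod_dividef)
    ultimately show ?thesis using P by (simp add: field_simps)
  qed
  have intL: "integrable N (\<lambda>y. \<Prod>i\<in>B. f i y powr w i)"
  proof (rule integrable_const_bound[where B="\<Prod>i\<in>B. b powr w i"])
    show "AE y in N. norm (\<Prod>i\<in>B. f i y powr w i) \<le> (\<Prod>i\<in>B. b powr w i)"
    proof (rule AE_I2)
      fix y assume y: "y \<in> space N"
      have "norm (\<Prod>i\<in>B. f i y powr w i) = (\<Prod>i\<in>B. f i y powr w i)"
        by (simp add: abs_prod)
      also have "\<dots> \<le> (\<Prod>i\<in>B. b powr w i)"
      proof (rule prod_mono)
        fix i assume i: "i \<in> B"
        show "0 \<le> f i y powr w i \<and> f i y powr w i \<le> b powr w i"
          using bnd[OF i y] fpos[OF i y] w[OF i] by (simp add: powr_mono2)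
      qed
      finally show "norm (\<Prod>i\<in>B. f i y powr w i) \<le> (\<Prod>i\<in>B. b powr w i)" .
    qed
  qed (use meas in auto)
  have intR: "integrable N (\<lambda>y. P * ((\<Sum>i\<in>B. w i * (f i y / U i)) + (1 - (\<Sum>i\<in>B. w i))))"
    using int by auto
  have "(\<integral>y. (\<Prod>i\<in>B. f i y powr w i) \<partial>N)
        \<le> (\<integral>y. P * ((\<Sum>i\<in>B. w i * (f i y / U i)) + (1 - (\<Sum>i\<in>B. w i))) \<partial>N)"
    by (rule integral_mono[OF intL intR pw])
  also have "\<dots> = P * ((\<Sum>i\<in>B. (\<integral>y. w i * (f i y / U i) \<partial>N)) + (1 - (\<Sum>i\<in>B. w i)))"
    using int by (simp add: integral_sum prob_space)
  also have "(\<Sum>i\<in>B. (\<integral>y. w i * (f i y / U i) \<partial>N)) = (\<Sum>i\<in>B. w i)"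
  proof (rule sum.cong)
    fix i assume i: "i \<in> B"
    have "U i \<noteq> 0" using Upos[OF i] by simp
    then show "(\<integral>y. w i * (f i y / U i) \<partial>N) = w i" by (simp add: U_def)
  qed simp
  also have "P * ((\<Sum>i\<in>B. w i) + (1 - (\<Sum>i\<in>B. w i))) = P" by simp
  finally show ?thesis unfolding P_def U_def .
qed

lemma integrable_bounded_prob:
  fixes f :: "'a \<Rightarrow> real"
  assumes "prob_space M" "f \<in> borel_measurable M" "\<And>x. x \<in> space M \<Longrightarrow> \<bar>f x\<bar> \<le> B"
  shows "integrable M f"
proof -
  interpret prob_space M by fact
  show ?thesis by (rule integrable_const_bound[where B=B]) (use assms in auto)
qed

lemma bnd_nonneg: "a \<le> (z::real) \<and> z \<le> b \<Longrightarrow> 0 < a \<Longrightarrow> 0 \<le> z \<and> z \<le> b" by auto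
lemma bnd_abs: "a \<le> (z::real) \<and> z \<le> b \<Longrightarrow> 0 < a \<Longrightarrow> \<bar>z\<bar> \<le> b" by auto

lemma prod_powr_bound:
  fixes g w :: "'i \<Rightarrow> real"
  assumes "\<And>i. i \<in> A \<Longrightarrow> 0 \<le> g i \<and> g i \<le> b" "\<And>i. i \<in> A \<Longrightarrow> 0 \<le> w i"
  shows "\<bar>\<Prod>i\<in>A. g i powr w i\<bar> \<le> (\<Prod>i\<in>A. b powr w i)"
proof -
  have "\<bar>\<Prod>i\<in>A. g i powr w i\<bar> = (\<Prod>i\<in>A. g i powr w i)" by (simp add: abs_prod)
  also have "\<dots> \<le> (\<Prod>i\<in>A. b powr w i)"
  proof (rule prod_mono)
    fix i assume i: "i \<in> A"
    show "0 \<le> g i powr w i \<and> g i powr w i \<le> b powr w i"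
      using assms[OF i] by (simp add: powr_mono2)
  qed
  finally show ?thesis .
qed

lemma finner:
  fixes P :: "'v \<Rightarrow> 'a measure" and F :: "'i \<Rightarrow> ('v \<Rightarrow> 'a) \<Rightarrow> real"
    and E :: "'i \<Rightarrow> 'v set" and w :: "'i \<Rightarrow> real"
  assumes I: "finite I" and A: "finite A" and Pprob: "\<And>v. prob_space (P v)"
    and meas: "\<And>i. i \<in> A \<Longrightarrow> F i \<in> borel_measurable (PiM I P)"
    and bnd: "\<And>i x. i \<in> A \<Longrightarrow> x \<in> space (PiM I P) \<Longrightarrow> a \<le> F i x \<and> F i x \<le> b"
    and a: "0 < a"
    and dep: "\<And>i x y. i \<in> A \<Longrightarrow> x \<in> space (PiM I P) \<Longrightarrow> y \<in> space (PiM I P) \<Longrightarrow>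
               (\<forall>u\<in>E i \<inter> I. x u = y u) \<Longrightarrow> F i x = F i y"
    and w: "\<And>i. i \<in> A \<Longrightarrow> 0 \<le> w i"
    and cov: "\<And>u. u \<in> I \<Longrightarrow> (\<Sum>i\<in>{i\<in>A. u \<in> E i}. w i) \<le> 1"
  shows "(\<integral>x. (\<Prod>i\<in>A. F i x powr w i) \<partial>PiM I P) \<le> (\<Prod>i\<in>A. (\<integral>x. F i x \<partial>PiM I P) powr w i)"
  using I meas bnd dep cov
proof (induction I arbitrary: F rule: finite_induct)
  case empty
  have sp: "space (PiM {} P) = {\<lambda>k. undefined}" by (rule space_PiM_empty)
  interpret prob_space "PiM {} P" by (rule prob_space_PiM) (use Pprob in auto)
  have c: "(\<integral>x. g x \<partial>PiM {} P) = g (\<lambda>k. undefined)" for g :: "('v \<Rightarrow> 'a) \<Rightarrow> real"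
  proof -
    have "(\<integral>x. g x \<partial>PiM {} P) = (\<integral>x. g (\<lambda>k. undefined) \<partial>PiM {} P)"
      by (rule Bochner_Integration.integral_cong[OF refl]) (auto simp: sp)
    also have "\<dots> = g (\<lambda>k. undefined)" by (simp add: prob_space)
    finally show ?thesis .
  qed
  show ?case by (simp add: c)
next
  case (insert v I F)
  have psf: "product_sigma_finite P"
    unfolding product_sigma_finite_def using Pprob prob_space_imp_sigma_finite by blast
  interpret product_sigma_finite P by (rule psf)
  interpret M: prob_space "P v" by (rule Pprob)
  have SF: "sigma_finite_measure (P v)" by (rule prob_space_imp_sigma_finite[OF Pprob])
  let ?Q = "PiM (insert v I) P" and ?R = "PiM I P"
  have Qp: "prob_space ?Q" and Rp: "prob_space ?R" by (auto intro!: prob_space_PiM Pprob)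
  have upd_sp: "x(v := y) \<in> space ?Q" if "x \<in> space ?R" "y \<in> space (P v)" for x y
    using that by (auto simp: space_PiM PiE_iff extensional_def)
  note measF = insert.prems(1) and bndF = insert.prems(2) and depF = insert.prems(3)
    and covF = insert.prems(4)
  define F' where "F' i x = (\<integral>y. F i (x(v := y)) \<partial>P v)" for i x
  have measU: "(\<lambda>(x, y). g (x(v := y))) \<in> borel_measurable (?R \<Otimes>\<^sub>M P v)"
    if "g \<in> borel_measurable ?Q" for g :: "('v \<Rightarrow> 'a) \<Rightarrow> real"
  proof -
    have "(\<lambda>(x, y). x(v := y)) \<in> measurable (?R \<Otimes>\<^sub>M P v) ?Q" by (rule measurable_add_dim)
    from measurable_comp[OF this that] show ?thesis by (simp add: comp_def case_prod_beta')
  qed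
  have measF': "F' i \<in> borel_measurable ?R" if "i \<in> A" for i
    unfolding F'_def
    using sigma_finite_measure.borel_measurable_lebesgue_integral[OF SF measU[OF measF[OF that]]] by (simp add: fun_upd_def)
  have intF: "integrable (P v) (\<lambda>y. F i (x(v := y)))" if "i \<in> A" "x \<in> space ?R" for i x
  proof (rule integrable_bounded_prob[OF Pprob, where B=b])
    show "(\<lambda>y. F i (x(v := y))) \<in> borel_measurable (P v)"
      using measurable_comp[OF measurable_component_update[OF that(2) insert.hyps(2)] measF[OF that(1)]]
      by (simp add: comp_def)
    fix y assume "y \<in> space (P v)"
    then show "\<bar>F i (x(v := y))\<bar> \<le> b" by (rule bnd_abs[OF bndF[OF that(1) upd_sp[OF that(2)]] a])
  qed
  have bndF': "a \<le> F' i x \<and> F' i x \<le> b" if "i \<in> A" "x \<in> space ?R" for i x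
  proof
    show "a \<le> F' i x" unfolding F'_def
      by (rule M.integral_ge_const[OF intF[OF that]]) (intro AE_I2, use bndF[OF that(1) upd_sp[OF that(2)]] in blast)
    show "F' i x \<le> b" unfolding F'_def
      by (rule M.integral_le_const[OF intF[OF that]]) (intro AE_I2, use bndF[OF that(1) upd_sp[OF that(2)]] in blast)
  qed
  have depF': "F' i x = F' i x'" if "i \<in> A" "x \<in> space ?R" "x' \<in> space ?R" "\<forall>u\<in>E i \<inter> I. x u = x' u" for i x x'
    unfolding F'_def
  proof (rule Bochner_Integration.integral_cong[OF refl])
    fix y assume y: "y \<in> space (P v)"
    show "F i (x(v := y)) = F i (x'(v := y))"
      by (rule depF[OF that(1) upd_sp[OF that(2) y] upd_sp[OF that(3) y]]) (use that(4) in auto)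
  qed
  have intQ: "integrable ?Q (F i)" if "i \<in> A" for i
    by (rule integrable_bounded_prob[OF Qp measF[OF that], where B=b])
       (rule bnd_abs[OF bndF[OF that] a])
  have eqF: "(\<integral>x. F i x \<partial>?Q) = (\<integral>x. F' i x \<partial>?R)" if "i \<in> A" for i
    unfolding F'_def by (rule product_integral_insert[OF insert.hyps(1,2) intQ[OF that]])
  define G where "G x = (\<Prod>i\<in>A. F i x powr w i)" for x
  have measG: "G \<in> borel_measurable ?Q" unfolding G_def using measF by measurable
  have bndG: "\<bar>G x\<bar> \<le> (\<Prod>i\<in>A. b powr w i)" if "x \<in> space ?Q" for x
    unfolding G_def by (rule prod_powr_bound[OF bnd_nonneg[OF bndF[OF _ that] a] w])
  have intG: "integrable ?Q G" by (rule integrable_bounded_prob[OF Qp measG bndG])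
  have eqG: "(\<integral>x. G x \<partial>?Q) = (\<integral>x. (\<integral>y. G (x(v := y)) \<partial>P v) \<partial>?R)"
    by (rule product_integral_insert[OF insert.hyps(1,2) intG])
  define B where "B = {i\<in>A. v \<in> E i}"
  have AB: "A = B \<union> (A - B)" "B \<inter> (A - B) = {}" "finite B" "finite (A - B)"
    using A by (auto simp: B_def)
  have pw: "(\<integral>y. G (x(v := y)) \<partial>P v) \<le> (\<Prod>i\<in>A. F' i x powr w i)" if x: "x \<in> space ?R" for x
  proof -
    have const: "F i (x(v := y)) = F' i x" if i: "i \<in> A - B" and y: "y \<in> space (P v)" for i y
    proof -
      have "F' i x = (\<integral>y'. F i (x(v := y)) \<partial>P v)"
        unfolding F'_def
      proof (rule Bochner_Integration.integral_cong[OF refl])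
        fix y' assume y': "y' \<in> space (P v)"
        show "F i (x(v := y')) = F i (x(v := y))"
          by (rule depF[OF _ upd_sp[OF x y'] upd_sp[OF x y]]) (use i in \<open>auto simp: B_def\<close>)
      qed
      also have "\<dots> = F i (x(v := y))" by (simp add: M.prob_space)
      finally show ?thesis by simp
    qed
    define c where "c = (\<Prod>i\<in>A - B. F' i x powr w i)"
    have Gsplit: "G (x(v := y)) = c * (\<Prod>i\<in>B. F i (x(v := y)) powr w i)" if y: "y \<in> space (P v)" for y
    proof -
      have "G (x(v := y)) = (\<Prod>i\<in>B. F i (x(v := y)) powr w i) * (\<Prod>i\<in>A - B. F i (x(v := y)) powr w i)"
        unfolding G_def by (subst AB(1), subst prod.union_disjoint) (use AB in auto)
      also have "(\<Prod>i\<in>A - B. F i (x(v := y)) powr w i) = c"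
        unfolding c_def by (rule prod.cong) (use const y in auto)
      finally show ?thesis by (simp add: fun_upd_def mult.commute)
    qed
    have "(\<integral>y. G (x(v := y)) \<partial>P v) = (\<integral>y. c * (\<Prod>i\<in>B. F i (x(v := y)) powr w i) \<partial>P v)"
      by (rule Bochner_Integration.integral_cong) (use Gsplit in auto)
    also have "\<dots> = c * (\<integral>y. (\<Prod>i\<in>B. F i (x(v := y)) powr w i) \<partial>P v)" by simp
    also have "\<dots> \<le> c * (\<Prod>i\<in>B. (\<integral>y. F i (x(v := y)) \<partial>P v) powr w i)"
    proof (rule mult_left_mono)
      show "0 \<le> c" unfolding c_def using bndF'[OF _ x] a by (intro prod_nonneg) auto
      show "(\<integral>y. (\<Prod>i\<in>B. F i (x(v := y)) powr w i) \<partial>P v) \<le> (\<Prod>i\<in>B. (\<integral>y. F i (x(v := y)) \<partial>P v) powr w i)"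
      proof (rule holder_slack[OF Pprob AB(3) _ _ a])
        fix i assume i: "i \<in> B"
        then have iA: "i \<in> A" by (simp add: B_def)
        show "(\<lambda>y. F i (x(v := y))) \<in> borel_measurable (P v)"
          using intF[OF iA x] by auto
        show "0 \<le> w i" using w iA .
        fix y assume "y \<in> space (P v)"
        then show "a \<le> F i (x(v := y)) \<and> F i (x(v := y)) \<le> b" using bndF[OF iA upd_sp[OF x]] by blast
      next
        show "(\<Sum>i\<in>B. w i) \<le> 1" unfolding B_def by (rule covF) simp
      qed
    qed
    also have "\<dots> = (\<Prod>i\<in>A. F' i x powr w i)"
      unfolding c_def F'_def by (subst (2) AB(1), subst prod.union_disjoint) (use AB in auto)
    finally show ?thesis .
  qed
  have intL: "integrable ?R (\<lambda>x. \<integral>y. G (x(v := y)) \<partial>P v)"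
  proof (rule integrable_bounded_prob[OF Rp, where B="\<Prod>i\<in>A. b powr w i"])
    show "(\<lambda>x. \<integral>y. G (x(v := y)) \<partial>P v) \<in> borel_measurable ?R"
      using sigma_finite_measure.borel_measurable_lebesgue_integral[OF SF measU[OF measG]] by (simp add: fun_upd_def)
    fix x assume x: "x \<in> space ?R"
    have "\<bar>\<integral>y. G (x(v := y)) \<partial>P v\<bar> \<le> (\<integral>y. \<bar>G (x(v := y))\<bar> \<partial>P v)"
      by (rule integral_abs_bound)
    also have "\<dots> \<le> (\<integral>y. (\<Prod>i\<in>A. b powr w i) \<partial>P v)"
    proof (rule integral_mono)
      show "integrable (P v) (\<lambda>y. \<bar>G (x(v := y))\<bar>)"
        by (rule integrable_bounded_prob[OF Pprob, where B="\<Prod>i\<in>A. b powr w i"])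
           (use measurable_comp[OF measurable_component_update[OF x insert.hyps(2)] measG]
             bndG upd_sp[OF x] in \<open>auto simp: comp_def\<close>)
    qed (use bndG upd_sp[OF x] in auto)
    also have "\<dots> = (\<Prod>i\<in>A. b powr w i)" by (simp add: M.prob_space)
    finally show "\<bar>\<integral>y. G (x(v := y)) \<partial>P v\<bar> \<le> (\<Prod>i\<in>A. b powr w i)" .
  qed
  have intR: "integrable ?R (\<lambda>x. \<Prod>i\<in>A. F' i x powr w i)"
  proof (rule integrable_bounded_prob[OF Rp, where B="\<Prod>i\<in>A. b powr w i"])
    show "(\<lambda>x. \<Prod>i\<in>A. F' i x powr w i) \<in> borel_measurable ?R" using measF' by measurable
    fix x assume xR: "x \<in> space ?R"
    show "\<bar>\<Prod>i\<in>A. F' i x powr w i\<bar> \<le> (\<Prod>i\<in>A. b powr w i)"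
      by (rule prod_powr_bound[OF bnd_nonneg[OF bndF'[OF _ xR] a] w])
  qed
  have "(\<integral>x. G x \<partial>?Q) \<le> (\<integral>x. (\<Prod>i\<in>A. F' i x powr w i) \<partial>?R)"
    unfolding eqG by (rule integral_mono[OF intL intR pw])
  also have "\<dots> \<le> (\<Prod>i\<in>A. (\<integral>x. F' i x \<partial>?R) powr w i)"
    by (rule insert.IH) (erule measF', erule (1) bndF', (rule depF'; assumption), (rule covF, simp))
  also have "\<dots> = (\<Prod>i\<in>A. (\<integral>x. F i x \<partial>?Q) powr w i)"
    by (rule prod.cong) (use eqF in auto)
  finally show ?case unfolding G_def .
qed

lemma measurable_PiM_kernel:
  fixes Kf :: "'i \<Rightarrow> 'a \<Rightarrow> 'b measure"
  assumes I: "finite I" and Kf: "\<And>i. i \<in> I \<Longrightarrow> Kf i \<in> L \<rightarrow>\<^sub>M prob_algebra N"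
  shows "(\<lambda>x. PiM I (\<lambda>i. Kf i x)) \<in> L \<rightarrow>\<^sub>M prob_algebra (PiM I (\<lambda>_. N))"
proof (rule measurable_prob_algebra_generated[OF sets_PiM Int_stable_prod_algebra prod_algebra_sets_into_space])
  fix a assume a: "a \<in> space L"
  have Ka: "prob_space (Kf i a) \<and> sets (Kf i a) = sets N" if "i \<in> I" for i
    using measurable_space[OF Kf[OF that] a] by (simp add: space_prob_algebra)
  show "prob_space (PiM I (\<lambda>i. Kf i a))" by (rule prob_space_PiM) (use Ka in auto)
  show "sets (PiM I (\<lambda>i. Kf i a)) = sets (PiM I (\<lambda>_. N))" by (rule sets_PiM_cong) (use Ka in auto)
next
  fix A assume A: "A \<in> prod_algebra I (\<lambda>_. N)"
  then obtain E where AE: "A = Pi\<^sub>E I E" and E: "E \<in> (\<Pi> i\<in>I. sets N)"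
    by (rule prod_algebraE_all)
  define M' where "M' a i = (if i \<in> I then Kf i a else null_measure N)" for a i
  have eq: "emeasure (PiM I (\<lambda>i. Kf i a)) A = (\<Prod>i\<in>I. emeasure (Kf i a) (E i))"
    if a: "a \<in> space L" for a
  proof -
    have Ka: "prob_space (Kf i a) \<and> sets (Kf i a) = sets N" if "i \<in> I" for i
      using measurable_space[OF Kf[OF that] a] by (simp add: space_prob_algebra)
    interpret product_sigma_finite "M' a"
      unfolding product_sigma_finite_def M'_def
      using Ka by (auto intro: prob_space_imp_sigma_finite finite_measure.sigma_finite_measure
                   simp: finite_measureI)
    have "PiM I (\<lambda>i. Kf i a) = PiM I (M' a)" by (rule PiM_cong) (auto simp: M'_def)
    moreover have "emeasure (PiM I (M' a)) (Pi\<^sub>E I E) = (\<Prod>i\<in>I. emeasure (M' a i) (E i))"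
      by (rule emeasure_PiM[OF I]) (use E Ka in \<open>auto simp: M'_def\<close>)
    ultimately show ?thesis by (simp add: AE M'_def)
  qed
  have "(\<lambda>a. \<Prod>i\<in>I. emeasure (Kf i a) (E i)) \<in> borel_measurable L"
  proof (rule borel_measurable_prod_ennreal)
    fix i assume i: "i \<in> I"
    show "(\<lambda>a. emeasure (Kf i a) (E i)) \<in> borel_measurable L"
      using measurable_emeasure_kernel[OF measurable_prob_algebraD[OF Kf[OF i]]] E i by auto
  qed
  then show "(\<lambda>a. emeasure (PiM I (\<lambda>i. Kf i a)) A) \<in> borel_measurable L"
    by (rule measurable_cong[THEN iffD1, rotated]) (use eq in auto)
qed

context
  fixes k n :: nat and V :: "nat \<Rightarrow> 'v set" and e :: "nat \<Rightarrow> nat \<Rightarrow> 'v"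
    and \<rho>j :: "nat \<Rightarrow> 'x measure" and K :: "(nat \<Rightarrow> 'x) \<Rightarrow> real measure"
  assumes hg: "k_partite_hypergraph k V n e"
    and rprob: "\<And>j. j < k \<Longrightarrow> prob_space (\<rho>j j)"
    and Kmeas: "K \<in> measurable (X_space k \<rho>j) (prob_algebra borel)"
begin

lemma X_prob: "prob_space (X_space k \<rho>j)"
  unfolding X_space_def by (rule prob_space_PiM) (use rprob in auto)

lemma D_meas: "(\<lambda>x. distr (K x) (Z_space k \<rho>j) (\<lambda>y. (x, y))) \<in> X_space k \<rho>j \<rightarrow>\<^sub>M prob_algebra (Z_space k \<rho>j)"
proof (rule measurable_distr_prob_space2[OF Kmeas])
  show "(\<lambda>(x, y). (x, y)) \<in> X_space k \<rho>j \<Otimes>\<^sub>M borel \<rightarrow>\<^sub>M Z_space k \<rho>j"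
    unfolding Z_space_def by (simp add: case_prod_beta')
qed

lemma rho_prob: "prob_space (rho_joint k \<rho>j K)"
  unfolding rho_joint_def
  by (rule prob_space_bind'[OF _ D_meas]) (simp add: space_prob_algebra X_prob)

lemma W_finite: "finite (SIGMA j:{..<k}. V j)"
  using hg unfolding k_partite_hypergraph_def by auto

lemma Omega_prob: "prob_space (PiM (SIGMA j:{..<k}. V j) (\<lambda>(j, v). \<rho>j j))"
  by (rule prob_space_PiM) (use rprob in auto)

lemma ev: "i < n \<Longrightarrow> j < k \<Longrightarrow> e i j \<in> V j"
  using hg unfolding k_partite_hypergraph_def by auto

lemma xf_meas: "i < n \<Longrightarrow> (\<lambda>\<phi>. edge_features k e \<phi> i) \<in> PiM (SIGMA j:{..<k}. V j) (\<lambda>(j, v). \<rho>j j) \<rightarrow>\<^sub>M X_space k \<rho>j"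
  unfolding edge_features_def X_space_def
proof (rule measurable_restrict)
  fix j assume i: "i < n" and j: "j \<in> {..<k}"
  have "(j, e i j) \<in> (SIGMA j:{..<k}. V j)" using ev[OF i] j by auto
  from measurable_component_singleton[OF this, of "\<lambda>(j, v). \<rho>j j"]
  show "(\<lambda>\<phi>. \<phi> (j, e i j)) \<in> PiM (SIGMA j:{..<k}. V j) (\<lambda>(j, v). \<rho>j j) \<rightarrow>\<^sub>M \<rho>j j" by simp
qed

lemma xf_distr: "i < n \<Longrightarrow> distr (PiM (SIGMA j:{..<k}. V j) (\<lambda>(j, v). \<rho>j j)) (X_space k \<rho>j) (\<lambda>\<phi>. edge_features k e \<phi> i) = X_space k \<rho>j"
proof -
  assume i: "i < n"
  have "distr (PiM (SIGMA j:{..<k}. V j) (\<lambda>(j, v). \<rho>j j)) (\<Pi>\<^sub>M j\<in>{..<k}. (\<lambda>(j, v). \<rho>j j) (j, e i j))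
          (\<lambda>\<omega>. \<lambda>n\<in>{..<k}. \<omega> (j_e n)) = (\<Pi>\<^sub>M j\<in>{..<k}. (\<lambda>(j, v). \<rho>j j) (j_e j))"
    if "j_e = (\<lambda>j. (j, e i j))" for j_e
    unfolding that
    by (rule distr_PiM_reindex) (use rprob ev[OF i] in \<open>auto simp: inj_on_def\<close>)
  then show ?thesis unfolding X_space_def edge_features_def by simp
qed

lemma Nk_meas: "(\<lambda>\<phi>. PiM {..<n} (\<lambda>i. distr (K (edge_features k e \<phi> i)) (Z_space k \<rho>j) (\<lambda>y. (edge_features k e \<phi> i, y))))
   \<in> PiM (SIGMA j:{..<k}. V j) (\<lambda>(j, v). \<rho>j j) \<rightarrow>\<^sub>M prob_algebra (PiM {..<n} (\<lambda>_. Z_space k \<rho>j))"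
proof (rule measurable_PiM_kernel)
  fix i assume "i \<in> {..<n}"
  then have i: "i < n" by simp
  from measurable_comp[OF xf_meas[OF i] D_meas]
  show "(\<lambda>\<phi>. distr (K (edge_features k e \<phi> i)) (Z_space k \<rho>j) (\<lambda>y. (edge_features k e \<phi> i, y)))
     \<in> PiM (SIGMA j:{..<k}. V j) (\<lambda>(j, v). \<rho>j j) \<rightarrow>\<^sub>M prob_algebra (Z_space k \<rho>j)"
    by (simp add: comp_def)
qed simp

lemma L_prob: "prob_space (networked_sample_law k V n e \<rho>j K)"
  unfolding networked_sample_law_def
  by (rule prob_space_bind'[OF _ Nk_meas]) (simp add: space_prob_algebra Omega_prob)

lemma D_sub: "(\<lambda>x. distr (K x) (Z_space k \<rho>j) (\<lambda>y. (x, y))) \<in> X_space k \<rho>j \<rightarrow>\<^sub>M subprob_algebra (Z_space k \<rho>j)"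
  by (rule measurable_prob_algebraD[OF D_meas])

lemma Nk_sub: "(\<lambda>\<phi>. PiM {..<n} (\<lambda>i. distr (K (edge_features k e \<phi> i)) (Z_space k \<rho>j) (\<lambda>y. (edge_features k e \<phi> i, y))))
   \<in> PiM (SIGMA j:{..<k}. V j) (\<lambda>(j, v). \<rho>j j) \<rightarrow>\<^sub>M subprob_algebra (PiM {..<n} (\<lambda>_. Z_space k \<rho>j))"
  by (rule measurable_prob_algebraD[OF Nk_meas])

lemma D_prob: "x \<in> space (X_space k \<rho>j) \<Longrightarrow> prob_space (distr (K x) (Z_space k \<rho>j) (\<lambda>y. (x, y)))"
  using measurable_space[OF D_meas] by (auto simp: space_prob_algebra)

lemma K_prob: "x \<in> space (X_space k \<rho>j) \<Longrightarrow> prob_space (K x) \<and> sets (K x) = sets borel"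
  using measurable_space[OF Kmeas] by (auto simp: space_prob_algebra)

lemma xf_space: "i < n \<Longrightarrow> \<phi> \<in> space (PiM (SIGMA j:{..<k}. V j) (\<lambda>(j, v). \<rho>j j)) \<Longrightarrow>
    edge_features k e \<phi> i \<in> space (X_space k \<rho>j)"
  using measurable_space[OF xf_meas] by blast

lemma AE_transfer:
  assumes Qm: "Measurable.pred (Z_space k \<rho>j) Q"
    and AEQ: "AE z in rho_joint k \<rho>j K. Q z"
  shows "AE zs in networked_sample_law k V n e \<rho>j K. \<forall>i<n. Q (zs i)"
proof -
  let ?\<Omega> = "PiM (SIGMA j:{..<k}. V j) (\<lambda>(j, v). \<rho>j j)"
  let ?D = "\<lambda>x. distr (K x) (Z_space k \<rho>j) (\<lambda>y. (x, y))"
  have AX: "AE x in X_space k \<rho>j. AE z in ?D x. Q z"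
    using AEQ unfolding rho_joint_def by (subst (asm) AE_bind[OF D_sub Qm])
  have pm: "Measurable.pred (PiM {..<n} (\<lambda>_. Z_space k \<rho>j)) (\<lambda>zs. \<forall>i<n. Q (zs i))"
    using Qm by measurable
  have main: "AE \<phi> in ?\<Omega>. AE zs in PiM {..<n} (\<lambda>i. ?D (edge_features k e \<phi> i)). \<forall>i<n. Q (zs i)"
  proof -
    have "AE \<phi> in ?\<Omega>. \<forall>i\<in>{..<n}. AE zs in PiM {..<n} (\<lambda>i. ?D (edge_features k e \<phi> i)). Q (zs i)"
    proof (rule AE_finite_allI, simp)
      fix i assume "i \<in> {..<n}"
      then have i: "i < n" by simp
      have "AE x in distr ?\<Omega> (X_space k \<rho>j) (\<lambda>\<phi>. edge_features k e \<phi> i). AE z in ?D x. Q z"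
        by (subst xf_distr[OF i]) (rule AX)
      from AE_distrD[OF xf_meas[OF i] this]
      have A1: "AE \<phi> in ?\<Omega>. AE z in ?D (edge_features k e \<phi> i). Q z" .
      show "AE \<phi> in ?\<Omega>. AE zs in PiM {..<n} (\<lambda>i. ?D (edge_features k e \<phi> i)). Q (zs i)"
      proof (rule AE_mp[OF A1], rule AE_I2, rule impI)
        fix \<phi> assume \<phi>: "\<phi> \<in> space ?\<Omega>" and q: "AE z in ?D (edge_features k e \<phi> i). Q z"
        show "AE zs in PiM {..<n} (\<lambda>i. ?D (edge_features k e \<phi> i)). Q (zs i)"
          by (rule AE_PiM_component[where M="\<lambda>i. ?D (edge_features k e \<phi> i)", OF _ _ q])
             (use D_prob xf_space[OF _ \<phi>] i in auto)
      qed
    qed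
    moreover have "AE zs in PiM {..<n} (\<lambda>i. ?D (edge_features k e \<phi> i)). \<forall>i<n. Q (zs i)"
      if h: "\<forall>i\<in>{..<n}. AE zs in PiM {..<n} (\<lambda>i. ?D (edge_features k e \<phi> i)). Q (zs i)" for \<phi>
    proof -
      have "AE zs in PiM {..<n} (\<lambda>i. ?D (edge_features k e \<phi> i)). \<forall>i\<in>{..<n}. Q (zs i)"
        by (rule AE_finite_allI) (use h in auto)
      then show ?thesis by (rule eventually_mono) auto
    qed
    ultimately show ?thesis
      by (rule eventually_mono)
  qed
  then show ?thesis
    unfolding networked_sample_law_def by (subst AE_bind[OF Nk_sub pm])
qed

lemma w_le1:
  assumes k: "1 \<le> k" and fw: "feasible_weighting k V n e w" and i: "i < n"
  shows "w i \<le> 1"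
proof -
  have w0: "\<And>i. i < n \<Longrightarrow> 0 \<le> w i" using fw by (simp add: feasible_weighting_def)
  have "(\<Sum>i'\<in>{i'. i' < n \<and> e i' 0 = e i 0}. w i') \<le> 1"
    using fw ev[OF i, of 0] k by (simp add: feasible_weighting_def)
  moreover have "w i \<le> (\<Sum>i'\<in>{i'. i' < n \<and> e i' 0 = e i 0}. w i')"
    by (rule member_le_sum) (use i w0 in auto)
  ultimately show ?thesis by linarith
qed

definition Hf :: "real \<Rightarrow> ((nat \<Rightarrow> 'x) \<times> real \<Rightarrow> real) \<Rightarrow> (nat \<Rightarrow> 'x) \<Rightarrow> real" where
  "Hf t Yh x = enn2real (\<integral>\<^sup>+y. ennreal (exp (t * Yh (x, y))) \<partial>K x)"

lemma Yh_sec_meas: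
  assumes Ym: "Yh \<in> borel_measurable (Z_space k \<rho>j)" and x: "x \<in> space (X_space k \<rho>j)"
  shows "(\<lambda>y. Yh (x, y)) \<in> borel_measurable (K x)"
proof -
  have "(\<lambda>y. Yh (x, y)) \<in> borel_measurable borel"
    using Ym x unfolding Z_space_def by measurable
  then show ?thesis using K_prob[OF x] by (simp cong: measurable_cong_sets)
qed

lemma Hf_eq:
  assumes Ym: "Yh \<in> borel_measurable (Z_space k \<rho>j)" and x: "x \<in> space (X_space k \<rho>j)"
  shows "Hf t Yh x = (\<integral>y. exp (t * Yh (x, y)) \<partial>K x)"
  unfolding Hf_def
  by (rule integral_eq_nn_integral[symmetric]) (use Yh_sec_meas[OF Ym x] in auto)

lemma Hf_meas:
  assumes Ym: "Yh \<in> borel_measurable (Z_space k \<rho>j)"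
  shows "Hf t Yh \<in> borel_measurable (X_space k \<rho>j)"
proof -
  have f: "(\<lambda>(x, y). ennreal (exp (t * Yh (x, y)))) \<in> borel_measurable (X_space k \<rho>j \<Otimes>\<^sub>M borel)"
    using Ym unfolding Z_space_def by measurable
  have "(\<lambda>x. \<integral>\<^sup>+y. ennreal (exp (t * Yh (x, y))) \<partial>K x) \<in> borel_measurable (X_space k \<rho>j)"
    by (rule nn_integral_measurable_subprob_algebra2[OF f measurable_prob_algebraD[OF Kmeas]])
  then show ?thesis unfolding Hf_def by measurable
qed

lemma Hf_bnd:
  assumes Ym: "Yh \<in> borel_measurable (Z_space k \<rho>j)" and Yb: "\<And>z. \<bar>Yh z\<bar> \<le> M"
    and t: "0 \<le> t" and x: "x \<in> space (X_space k \<rho>j)"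
  shows "exp (- (t * M)) \<le> Hf t Yh x \<and> Hf t Yh x \<le> exp (t * M)"
proof -
  interpret prob_space "K x" using K_prob[OF x] by simp
  have bnd: "exp (- (t * M)) \<le> exp (t * Yh (x, y)) \<and> exp (t * Yh (x, y)) \<le> exp (t * M)" for y
  proof -
    have "- M \<le> Yh (x, y) \<and> Yh (x, y) \<le> M" using Yb[of "(x, y)"] by linarith
    then have "- (t * M) \<le> t * Yh (x, y) \<and> t * Yh (x, y) \<le> t * M"
      using t mult_left_mono[of "- M" "Yh (x, y)" t] mult_left_mono[of "Yh (x, y)" M t] by simp
    then show ?thesis by simp
  qed
  have int: "integrable (K x) (\<lambda>y. exp (t * Yh (x, y)))"
    by (rule integrable_const_bound[where B="exp (t * M)"]) (use bnd Yh_sec_meas[OF Ym x] in auto)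
  show ?thesis unfolding Hf_eq[OF Ym x]
    by (intro conjI integral_ge_const integral_le_const int) (use bnd in auto)
qed

lemma exp_int:
  fixes Yh :: "(nat \<Rightarrow> 'x) \<times> real \<Rightarrow> real"
  assumes Ym: "Yh \<in> borel_measurable (Z_space k \<rho>j)" and Yb: "\<And>z. \<bar>Yh z\<bar> \<le> M"
    and t: "0 \<le> t" and x: "x \<in> space (X_space k \<rho>j)"
  shows "integrable (K x) (\<lambda>y. exp (t * Yh (x, y)))"
proof -
  interpret prob_space "K x" using K_prob[OF x] by simp
  have "exp (t * Yh (x, y)) \<le> exp (t * M)" for y
    using t mult_left_mono[of "Yh (x, y)" M t] Yb[of "(x, y)"] by simp
  then show ?thesis
    by (intro integrable_const_bound[where B="exp (t * M)"]) (use Yh_sec_meas[OF Ym x] in auto)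
qed

lemma nn_D:
  assumes x: "x \<in> space (X_space k \<rho>j)" and g: "g \<in> borel_measurable (Z_space k \<rho>j)"
  shows "(\<integral>\<^sup>+z. g z \<partial>distr (K x) (Z_space k \<rho>j) (\<lambda>y. (x, y))) = (\<integral>\<^sup>+y. g (x, y) \<partial>K x)"
proof -
  have "(\<lambda>y. (x, y)) \<in> borel \<rightarrow>\<^sub>M X_space k \<rho>j \<Otimes>\<^sub>M borel"
    by (rule measurable_Pair[OF measurable_const[OF x] measurable_ident_sets[OF refl]])
  then have T: "(\<lambda>y. (x, y)) \<in> K x \<rightarrow>\<^sub>M Z_space k \<rho>j"
    unfolding Z_space_def using K_prob[OF x] by (simp cong: measurable_cong_sets)
  show ?thesis by (rule nn_integral_distr[OF T]) (use g in simp)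
qed

lemma rho_nn:
  assumes g: "g \<in> borel_measurable (Z_space k \<rho>j)"
  shows "(\<integral>\<^sup>+z. g z \<partial>rho_joint k \<rho>j K) = (\<integral>\<^sup>+x. (\<integral>\<^sup>+y. g (x, y) \<partial>K x) \<partial>X_space k \<rho>j)"
  unfolding rho_joint_def
  by (subst nn_integral_bind[OF g D_sub]) (rule nn_integral_cong, rule nn_D[OF _ g])

lemma ennreal_Hf:
  assumes Ym: "Yh \<in> borel_measurable (Z_space k \<rho>j)" and Yb: "\<And>z. \<bar>Yh z\<bar> \<le> M"
    and t: "0 \<le> t" and x: "x \<in> space (X_space k \<rho>j)"
  shows "ennreal (Hf t Yh x) = (\<integral>\<^sup>+y. ennreal (exp (t * Yh (x, y))) \<partial>K x)"
  unfolding Hf_eq[OF Ym x]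
  by (rule nn_integral_eq_integral[symmetric, OF exp_int[OF Ym Yb t x]]) simp

lemma rho_exp:
  fixes Yh :: "(nat \<Rightarrow> 'x) \<times> real \<Rightarrow> real"
  assumes Ym: "Yh \<in> borel_measurable (Z_space k \<rho>j)" and Yb: "\<And>z. \<bar>Yh z\<bar> \<le> M" and t: "0 \<le> t"
  shows "(\<integral>z. exp (t * Yh z) \<partial>rho_joint k \<rho>j K) = (\<integral>x. Hf t Yh x \<partial>X_space k \<rho>j)"
proof -
  have m: "(\<lambda>z. ennreal (exp (t * Yh z))) \<in> borel_measurable (Z_space k \<rho>j)" using Ym by measurable
  have m2: "(\<lambda>z. exp (t * Yh z)) \<in> borel_measurable (rho_joint k \<rho>j K)"
  proof -
    have "sets (rho_joint k \<rho>j K) = sets (Z_space k \<rho>j)"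
      unfolding rho_joint_def by (rule sets_bind'[OF _ D_meas]) (simp add: space_prob_algebra X_prob)
    then show ?thesis using Ym by (simp cong: measurable_cong_sets)
  qed
  have "(\<integral>z. exp (t * Yh z) \<partial>rho_joint k \<rho>j K) = enn2real (\<integral>\<^sup>+z. ennreal (exp (t * Yh z)) \<partial>rho_joint k \<rho>j K)"
    by (rule integral_eq_nn_integral[OF m2]) simp
  also have "\<dots> = enn2real (\<integral>\<^sup>+x. ennreal (Hf t Yh x) \<partial>X_space k \<rho>j)"
    unfolding rho_nn[OF m] by (rule arg_cong[where f=enn2real], rule nn_integral_cong, rule ennreal_Hf[OF Ym Yb t, symmetric])
  also have "\<dots> = (\<integral>x. Hf t Yh x \<partial>X_space k \<rho>j)"
    by (rule integral_eq_nn_integral[symmetric, OF Hf_meas[OF Ym]]) (use Hf_bnd[OF Ym Yb t] in \<open>auto intro!: AE_I2 order_trans[OF exp_ge_zero]\<close>)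
  finally show ?thesis .
qed

lemma holder_one:
  fixes Yh :: "(nat \<Rightarrow> 'x) \<times> real \<Rightarrow> real"
  assumes Ym: "Yh \<in> borel_measurable (Z_space k \<rho>j)" and Yb: "\<And>z. \<bar>Yh z\<bar> \<le> M"
    and t: "0 \<le> t" and x: "x \<in> space (X_space k \<rho>j)" and w: "0 \<le> u" "u \<le> 1"
  shows "(\<integral>y. exp (t * u * Yh (x, y)) \<partial>K x) \<le> Hf t Yh x powr u"
proof -
  have bnd: "exp (- (t * M)) \<le> exp (t * Yh (x, y)) \<and> exp (t * Yh (x, y)) \<le> exp (t * M)" for y
  proof -
    have "- M \<le> Yh (x, y) \<and> Yh (x, y) \<le> M" using Yb[of "(x, y)"] by linarith
    then have "- (t * M) \<le> t * Yh (x, y) \<and> t * Yh (x, y) \<le> t * M"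
      using t mult_left_mono[of "- M" "Yh (x, y)" t] mult_left_mono[of "Yh (x, y)" M t] by simp
    then show ?thesis by simp
  qed
  have "(\<integral>y. (\<Prod>i\<in>{()}. exp (t * Yh (x, y)) powr u) \<partial>K x) \<le> (\<Prod>i\<in>{()}. (\<integral>y. exp (t * Yh (x, y)) \<partial>K x) powr u)"
    by (rule holder_slack[where f="\<lambda>_ y. exp (t * Yh (x, y))" and w="\<lambda>_. u" and a="exp (- (t * M))" and b="exp (t * M)"])
       (use K_prob[OF x] Yh_sec_meas[OF Ym x] bnd w in auto)
  moreover have "exp (t * Yh (x, y)) powr u = exp (t * u * Yh (x, y))" for y
    by (simp add: powr_def algebra_simps)
  ultimately show ?thesis by (simp add: Hf_eq[OF Ym x])
qed

lemma mgf_prod: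
  fixes Yh :: "(nat \<Rightarrow> 'x) \<times> real \<Rightarrow> real" and w :: "nat \<Rightarrow> real"
  assumes Ym: "Yh \<in> borel_measurable (Z_space k \<rho>j)" and Yb: "\<And>z. \<bar>Yh z\<bar> \<le> M"
    and t: "0 \<le> t" and k: "1 \<le> k" and fw: "feasible_weighting k V n e w"
  shows "(\<integral>zs. (\<Prod>i<n. exp (t * w i * Yh (zs i))) \<partial>networked_sample_law k V n e \<rho>j K)
         \<le> (\<integral>z. exp (t * Yh z) \<partial>rho_joint k \<rho>j K) powr (\<Sum>i<n. w i)"
proof -
  let ?\<Omega> = "PiM (SIGMA j:{..<k}. V j) (\<lambda>(j, v). \<rho>j j)"
  let ?D = "\<lambda>x. distr (K x) (Z_space k \<rho>j) (\<lambda>y. (x, y))"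
  let ?Nk = "\<lambda>\<phi>. PiM {..<n} (\<lambda>i. ?D (edge_features k e \<phi> i))"
  let ?L = "networked_sample_law k V n e \<rho>j K"
  let ?H = "Hf t Yh"
  define a where "a = exp (- (t * M))"
  define b where "b = exp (t * M)"
  have a: "0 < a" by (simp add: a_def)
  have w0: "\<And>i. i < n \<Longrightarrow> 0 \<le> w i" using fw by (simp add: feasible_weighting_def)
  have w1: "\<And>i. i < n \<Longrightarrow> w i \<le> 1" using w_le1[OF k fw] .
  have Hb: "\<And>x. x \<in> space (X_space k \<rho>j) \<Longrightarrow> a \<le> ?H x \<and> ?H x \<le> b"
    unfolding a_def b_def by (rule Hf_bnd[OF Ym Yb t])
  define m where "m = (\<integral>x. ?H x \<partial>X_space k \<rho>j)"
  have m_eq: "(\<integral>z. exp (t * Yh z) \<partial>rho_joint k \<rho>j K) = m"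
    unfolding m_def by (rule rho_exp[OF Ym Yb t])
  have Hint: "integrable (X_space k \<rho>j) ?H"
    by (rule integrable_bounded_prob[OF X_prob Hf_meas[OF Ym], where B=b]) (rule bnd_abs[OF Hb a])
  have m_pos: "a \<le> m"
    unfolding m_def
    by (rule prob_space.integral_ge_const[OF X_prob Hint]) (use Hb in \<open>auto intro!: AE_I2\<close>)
  define G where "G \<phi> = (\<Prod>i<n. ?H (edge_features k e \<phi> i) powr w i)" for \<phi>
  have inner: "(\<integral>\<^sup>+zs. ennreal (\<Prod>i<n. exp (t * w i * Yh (zs i))) \<partial>?Nk \<phi>) \<le> ennreal (G \<phi>)"
    if \<phi>: "\<phi> \<in> space ?\<Omega>" for \<phi>
  proof -
    define M'' where "M'' i = (if i < n then ?D (edge_features k e \<phi> i) else null_measure (Z_space k \<rho>j))" for i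
    have xs: "\<And>i. i < n \<Longrightarrow> edge_features k e \<phi> i \<in> space (X_space k \<rho>j)" using xf_space \<phi> by blast
    interpret product_sigma_finite M''
      unfolding product_sigma_finite_def M''_def
      using D_prob[OF xs] by (auto intro: prob_space_imp_sigma_finite finite_measure.sigma_finite_measure
                   simp: finite_measureI)
    have sD: "sets (?D x) = sets (Z_space k \<rho>j)" for x by simp
    have eqN: "?Nk \<phi> = PiM {..<n} M''" by (rule PiM_cong) (auto simp: M''_def)
    have "(\<integral>\<^sup>+zs. ennreal (\<Prod>i<n. exp (t * w i * Yh (zs i))) \<partial>?Nk \<phi>)
        = (\<integral>\<^sup>+zs. (\<Prod>i<n. ennreal (exp (t * w i * Yh (zs i)))) \<partial>PiM {..<n} M'')"
      unfolding eqN by (rule nn_integral_cong) (simp add: prod_ennreal)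
    also have "\<dots> = (\<Prod>i<n. \<integral>\<^sup>+z. ennreal (exp (t * w i * Yh z)) \<partial>M'' i)"
    proof (rule product_nn_integral_prod, simp)
      fix i assume "i \<in> {..<n}"
      then have "M'' i = ?D (edge_features k e \<phi> i)" by (simp add: M''_def)
      moreover have "(\<lambda>z. ennreal (exp (t * w i * Yh z))) \<in> borel_measurable (Z_space k \<rho>j)" using Ym by measurable
      ultimately show "(\<lambda>z. ennreal (exp (t * w i * Yh z))) \<in> borel_measurable (M'' i)"
        by (simp cong: measurable_cong_sets)
    qed
    also have "\<dots> = (\<Prod>i<n. ennreal (\<integral>y. exp (t * w i * Yh (edge_features k e \<phi> i, y)) \<partial>K (edge_features k e \<phi> i)))"
    proof (rule prod.cong[OF refl])
      fix i assume "i \<in> {..<n}"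
      then have i: "i < n" by simp
      have meas: "(\<lambda>z. ennreal (exp (t * w i * Yh z))) \<in> borel_measurable (Z_space k \<rho>j)" using Ym by measurable
      have "(\<integral>\<^sup>+z. ennreal (exp (t * w i * Yh z)) \<partial>M'' i)
          = (\<integral>\<^sup>+y. ennreal (exp (t * w i * Yh (edge_features k e \<phi> i, y))) \<partial>K (edge_features k e \<phi> i))"
        unfolding M''_def using i by (simp add: nn_D[OF xs[OF i] meas])
      also have "\<dots> = ennreal (\<integral>y. exp (t * w i * Yh (edge_features k e \<phi> i, y)) \<partial>K (edge_features k e \<phi> i))"
        by (rule nn_integral_eq_integral[OF exp_int[OF Ym Yb _ xs[OF i]]]) (use t w0[OF i] in auto)
      finally show "(\<integral>\<^sup>+z. ennreal (exp (t * w i * Yh z)) \<partial>M'' i) = \<dots>" .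
    qed
    also have "\<dots> = ennreal (\<Prod>i<n. \<integral>y. exp (t * w i * Yh (edge_features k e \<phi> i, y)) \<partial>K (edge_features k e \<phi> i))"
      by (rule prod_ennreal) (auto intro!: Bochner_Integration.integral_nonneg)
    also have "\<dots> \<le> ennreal (G \<phi>)"
      unfolding G_def
    proof (rule ennreal_leI, rule prod_mono)
      fix i assume "i \<in> {..<n}"
      then have i: "i < n" by simp
      show "0 \<le> (\<integral>y. exp (t * w i * Yh (edge_features k e \<phi> i, y)) \<partial>K (edge_features k e \<phi> i)) \<and>
            (\<integral>y. exp (t * w i * Yh (edge_features k e \<phi> i, y)) \<partial>K (edge_features k e \<phi> i))
              \<le> ?H (edge_features k e \<phi> i) powr w i"
        using holder_one[OF Ym Yb t xs[OF i] w0[OF i] w1[OF i]]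
        by (auto intro!: Bochner_Integration.integral_nonneg)
    qed
    finally show ?thesis .
  qed
  have xs: "\<And>i \<phi>. i < n \<Longrightarrow> \<phi> \<in> space ?\<Omega> \<Longrightarrow> edge_features k e \<phi> i \<in> space (X_space k \<rho>j)"
    using xf_space by blast
  have Hxm: "(\<lambda>\<phi>. ?H (edge_features k e \<phi> i)) \<in> borel_measurable ?\<Omega>" if i: "i < n" for i
    using measurable_comp[OF xf_meas[OF i] Hf_meas[OF Ym]] by (simp add: comp_def)
  have Hxi: "(\<integral>\<phi>. ?H (edge_features k e \<phi> i) \<partial>?\<Omega>) = m" if i: "i < n" for i
  proof -
    have "(\<integral>\<phi>. ?H (edge_features k e \<phi> i) \<partial>?\<Omega>)
        = integral\<^sup>L (distr ?\<Omega> (X_space k \<rho>j) (\<lambda>\<phi>. edge_features k e \<phi> i)) ?H"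
      by (rule integral_distr[symmetric, OF xf_meas[OF i] Hf_meas[OF Ym]])
    then show ?thesis unfolding m_def xf_distr[OF i] .
  qed
  have Gm: "G \<in> borel_measurable ?\<Omega>" unfolding G_def using Hxm by measurable
  have Gb: "\<bar>G \<phi>\<bar> \<le> (\<Prod>i<n. b powr w i)" if "\<phi> \<in> space ?\<Omega>" for \<phi>
    unfolding G_def by (rule prod_powr_bound[OF bnd_nonneg[OF Hb[OF xs[OF _ that]] a] w0]) auto
  have Gint: "integrable ?\<Omega> G" by (rule integrable_bounded_prob[OF Omega_prob Gm Gb])
  have fin: "(\<integral>\<phi>. G \<phi> \<partial>?\<Omega>) \<le> (\<Prod>i<n. (\<integral>\<phi>. ?H (edge_features k e \<phi> i) \<partial>?\<Omega>) powr w i)"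
  proof -
    define P' :: "nat \<times> 'v \<Rightarrow> 'x measure" where "P' u = (if fst u < k then \<rho>j (fst u) else return (count_space UNIV) undefined)" for u
    have eqO: "PiM (SIGMA j:{..<k}. V j) P' = ?\<Omega>" by (rule PiM_cong) (auto simp: P'_def)
    have "(\<integral>\<phi>. (\<Prod>i\<in>{..<n}. ?H (edge_features k e \<phi> i) powr w i) \<partial>PiM (SIGMA j:{..<k}. V j) P')
          \<le> (\<Prod>i\<in>{..<n}. (\<integral>\<phi>. ?H (edge_features k e \<phi> i) \<partial>PiM (SIGMA j:{..<k}. V j) P') powr w i)"
    proof (rule finner[where E="\<lambda>i. (\<lambda>j. (j, e i j)) ` {..<k}" and a=a and b=b])
      show "finite (SIGMA j:{..<k}. V j)" by (rule W_finite)
      show "finite {..<n}" by simp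
      show "prob_space (P' v)" for v
        by (cases "fst v < k") (auto simp: P'_def rprob intro: prob_space_return)
      show "0 < a" by (rule a)
      fix i assume "i \<in> {..<n}"
      then have i: "i < n" by simp
      show "(\<lambda>\<phi>. ?H (edge_features k e \<phi> i)) \<in> borel_measurable (PiM (SIGMA j:{..<k}. V j) P')"
        unfolding eqO by (rule Hxm[OF i])
      show "0 \<le> w i" by (rule w0[OF i])
      fix x assume x: "x \<in> space (PiM (SIGMA j:{..<k}. V j) P')"
      then show "a \<le> ?H (edge_features k e x i) \<and> ?H (edge_features k e x i) \<le> b"
        unfolding eqO by (intro Hb xs[OF i])
      fix y assume y: "y \<in> space (PiM (SIGMA j:{..<k}. V j) P')"
        and agree: "\<forall>u\<in>(\<lambda>j. (j, e i j)) ` {..<k} \<inter> (SIGMA j:{..<k}. V j). x u = y u"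
      have "edge_features k e x i = edge_features k e y i"
        unfolding edge_features_def
      proof (rule restrict_ext)
        fix j assume j: "j \<in> {..<k}"
        then have "(j, e i j) \<in> (\<lambda>j. (j, e i j)) ` {..<k} \<inter> (SIGMA j:{..<k}. V j)" using ev[OF i] by auto
        then show "x (j, e i j) = y (j, e i j)" using agree by blast
      qed
      then show "?H (edge_features k e x i) = ?H (edge_features k e y i)" by simp
    next
      fix u assume u: "u \<in> (SIGMA j:{..<k}. V j)"
      then obtain j v where uj: "u = (j, v)" "j < k" "v \<in> V j" by auto
      have "{i \<in> {..<n}. u \<in> (\<lambda>j. (j, e i j)) ` {..<k}} = {i. i < n \<and> e i j = v}"
        using uj by auto
      then show "(\<Sum>i\<in>{i \<in> {..<n}. u \<in> (\<lambda>j. (j, e i j)) ` {..<k}}. w i) \<le> 1"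
        using fw uj by (simp add: feasible_weighting_def)
    qed
    then show ?thesis unfolding eqO G_def by simp
  qed
  have LHSm: "(\<lambda>zs. \<Prod>i<n. exp (t * w i * Yh (zs i))) \<in> borel_measurable ?L"
  proof -
    have "sets ?L = sets (PiM {..<n} (\<lambda>_. Z_space k \<rho>j))"
      unfolding networked_sample_law_def
      by (rule sets_bind'[OF _ Nk_meas]) (simp add: space_prob_algebra Omega_prob)
    moreover have "(\<lambda>zs. \<Prod>i<n. exp (t * w i * Yh (zs i))) \<in> borel_measurable (PiM {..<n} (\<lambda>_. Z_space k \<rho>j))"
      using Ym by measurable
    ultimately show ?thesis by (simp cong: measurable_cong_sets)
  qed
  have LHSm': "(\<lambda>zs. ennreal (\<Prod>i<n. exp (t * w i * Yh (zs i)))) \<in> borel_measurable (PiM {..<n} (\<lambda>_. Z_space k \<rho>j))"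
    using Ym by measurable
  have "(\<integral>\<^sup>+zs. ennreal (\<Prod>i<n. exp (t * w i * Yh (zs i))) \<partial>?L)
      = (\<integral>\<^sup>+\<phi>. (\<integral>\<^sup>+zs. ennreal (\<Prod>i<n. exp (t * w i * Yh (zs i))) \<partial>?Nk \<phi>) \<partial>?\<Omega>)"
    unfolding networked_sample_law_def by (rule nn_integral_bind[OF LHSm' Nk_sub])
  also have "\<dots> \<le> (\<integral>\<^sup>+\<phi>. ennreal (G \<phi>) \<partial>?\<Omega>)"
    by (rule nn_integral_mono) (rule inner)
  also have "\<dots> = ennreal (\<integral>\<phi>. G \<phi> \<partial>?\<Omega>)"
    by (rule nn_integral_eq_integral[OF Gint]) (auto intro!: AE_I2 prod_nonneg simp: G_def)
  also have "\<dots> \<le> ennreal (m powr (\<Sum>i<n. w i))"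
  proof (rule ennreal_leI)
    have "m \<noteq> 0" using m_pos a by linarith
    then have "m powr (\<Sum>i<n. w i) = (\<Prod>i<n. m powr w i)" by (rule powr_sum)
    then show "(\<integral>\<phi>. G \<phi> \<partial>?\<Omega>) \<le> m powr (\<Sum>i<n. w i)" using fin Hxi by simp
  qed
  finally have nnb: "(\<integral>\<^sup>+zs. ennreal (\<Prod>i<n. exp (t * w i * Yh (zs i))) \<partial>?L) \<le> ennreal (m powr (\<Sum>i<n. w i))" .
  have "(\<integral>zs. (\<Prod>i<n. exp (t * w i * Yh (zs i))) \<partial>?L) = enn2real (\<integral>\<^sup>+zs. ennreal (\<Prod>i<n. exp (t * w i * Yh (zs i))) \<partial>?L)"
    by (rule integral_eq_nn_integral[OF LHSm]) (auto intro!: AE_I2 prod_nonneg)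
  also have "\<dots> \<le> enn2real (ennreal (m powr (\<Sum>i<n. w i)))"
    by (rule enn2real_mono[OF nnb]) simp
  also have "\<dots> = m powr (\<Sum>i<n. w i)" by simp
  finally show ?thesis unfolding m_eq .
qed

end

lemma bern_mgf:
  fixes Y :: "'a \<Rightarrow> real"
  assumes R: "prob_space R" and Ym: "Y \<in> borel_measurable R" and Yb: "\<And>z. \<bar>Y z\<bar> \<le> M"
    and E0: "(\<integral>z. Y z \<partial>R) = 0" and E2: "(\<integral>z. (Y z)^2 \<partial>R) = s2"
    and t: "0 \<le> t" and tM: "t * M < 3"
  shows "(\<integral>z. exp (t * Y z) \<partial>R) \<le> 1 + t^2 * s2 / (2 * (1 - t * M / 3))"
proof -
  interpret prob_space R by fact
  have M0: "0 \<le> M" using Yb[of undefined] by linarith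
  define c where "c = 2 * (1 - t * M / 3)"
  have c: "0 < c" using tM by (simp add: c_def mult.commute)
  have pw: "exp (t * Y z) \<le> 1 + t * Y z + t^2 / c * (Y z)^2" for z
  proof -
    have "t * Y z \<le> t * M" using Yb[of z] t by (intro mult_left_mono) auto
    from exp_bern[OF mult_nonneg_nonneg[OF t M0] tM this]
    show ?thesis by (simp add: c_def power_mult_distrib)
  qed
  have iY: "integrable R Y" by (rule integrable_bounded_prob[OF R Ym, where B=M]) (use Yb in auto)
  have iY2: "integrable R (\<lambda>z. (Y z)^2)"
  proof (rule integrable_bounded_prob[OF R, where B="M^2"])
    show "(\<lambda>z. (Y z)^2) \<in> borel_measurable R" using Ym by measurable
    fix z show "\<bar>(Y z)^2\<bar> \<le> M^2" using power_mono[OF Yb[of z] abs_ge_zero, of 2] by simp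
  qed
  have iE: "integrable R (\<lambda>z. exp (t * Y z))"
  proof (rule integrable_bounded_prob[OF R, where B="exp (t * M)"])
    show "(\<lambda>z. exp (t * Y z)) \<in> borel_measurable R" using Ym by measurable
    fix z have "t * Y z \<le> t * M" using Yb[of z] t by (intro mult_left_mono) auto
    then show "\<bar>exp (t * Y z)\<bar> \<le> exp (t * M)" by simp
  qed
  have "(\<integral>z. exp (t * Y z) \<partial>R) \<le> (\<integral>z. 1 + t * Y z + t^2 / c * (Y z)^2 \<partial>R)"
    by (rule integral_mono[OF iE _ pw]) (use iY iY2 in auto)
  also have "\<dots> = 1 + t * (\<integral>z. Y z \<partial>R) + t^2 / c * (\<integral>z. (Y z)^2 \<partial>R)"
    using iY iY2 by (simp add: prob_space)
  also have "\<dots> = 1 + t^2 * s2 / c" by (simp add: E0 E2)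
  finally show ?thesis by (simp add: c_def)
qed

lemma final_arith:
  fixes s \<epsilon> M s2 m :: real
  assumes s: "0 < s" and eps: "0 < \<epsilon>" and M: "0 \<le> M" and s2: "0 \<le> s2"
    and d: "0 < s2 + M * \<epsilon> / 3" and m: "0 < m"
    and mb1: "0 < s2 \<Longrightarrow> m \<le> 1 + (\<epsilon> / (s2 + M * \<epsilon> / 3))^2 * s2 / (2 * (1 - (\<epsilon> / (s2 + M * \<epsilon> / 3)) * M / 3))"
    and mb0: "s2 = 0 \<Longrightarrow> m \<le> 1"
  shows "exp (- ((\<epsilon> / (s2 + M * \<epsilon> / 3)) * s * \<epsilon>)) * m powr s \<le> exp (- (s * \<epsilon>^2 / (2 * (s2 + M * \<epsilon> / 3))))"
proof -
  define d where "d = s2 + M * \<epsilon> / 3"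
  have d0: "0 < d" using d by (simp add: d_def)
  define tt where "tt = \<epsilon> / d"
  define B where "B = (if s2 = 0 then 0 else \<epsilon>^2 / (2 * d))"
  have mB: "m \<le> exp B"
  proof (cases "s2 = 0")
    case True then show ?thesis using mb0 by (simp add: B_def)
  next
    case False
    then have s2p: "0 < s2" using s2 by simp
    have one: "1 - tt * M / 3 = s2 / d" using d0 by (simp add: tt_def d_def field_simps)
    have "tt^2 * s2 / (2 * (1 - tt * M / 3)) = \<epsilon>^2 / (2 * d)"
      unfolding one using d0 s2p by (simp add: tt_def field_simps power2_eq_square)
    then have "m \<le> 1 + \<epsilon>^2 / (2 * d)" using mb1[OF s2p] by (simp add: tt_def d_def)
    also have "\<dots> \<le> exp (\<epsilon>^2 / (2 * d))" by (rule exp_ge_add_one_self)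
    finally show ?thesis using False by (simp add: B_def)
  qed
  have "m powr s \<le> exp B powr s" by (rule powr_mono2) (use s m mB in auto)
  also have "\<dots> = exp (s * B)" by (simp add: powr_def)
  finally have ms: "m powr s \<le> exp (s * B)" .
  have ex: "- (tt * s * \<epsilon>) + s * B \<le> - (s * \<epsilon>^2 / (2 * d))"
  proof (cases "s2 = 0")
    case True
    have "s * \<epsilon>^2 / (2 * d) \<le> s * \<epsilon>^2 / d"
      using d0 s eps by (simp add: divide_simps)
    moreover have "tt * s * \<epsilon> = s * \<epsilon>^2 / d" by (simp add: tt_def power2_eq_square)
    ultimately show ?thesis using True by (simp add: B_def)
  next
    case False
    have e1: "tt * s * \<epsilon> = s * \<epsilon>^2 / d" by (simp add: tt_def power2_eq_square)
    have e2: "s * (\<epsilon>^2 / (2 * d)) = s * \<epsilon>^2 / d / 2" by simp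
    have e3: "s * \<epsilon>^2 / (2 * d) = s * \<epsilon>^2 / d / 2" by simp
    show ?thesis using False unfolding B_def e1 by (simp add: e2 e3)
  qed
  have "exp (- (tt * s * \<epsilon>)) * m powr s \<le> exp (- (tt * s * \<epsilon>)) * exp (s * B)"
    by (rule mult_left_mono[OF ms]) simp
  also have "\<dots> = exp (- (tt * s * \<epsilon>) + s * B)" by (rule exp_add[symmetric])
  also have "\<dots> \<le> exp (- (s * \<epsilon>^2 / (2 * d)))" using ex by simp
  finally show ?thesis by (simp add: tt_def d_def)
qed

theorem theorem6:
  fixes k n :: nat
    and V :: "nat \<Rightarrow> 'v set"
    and e :: "nat \<Rightarrow> nat \<Rightarrow> 'v"
    and S :: "nat \<Rightarrow> 'x::metric_space set"
    and \<rho>j :: "nat \<Rightarrow> 'x measure"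
    and K :: "(nat \<Rightarrow> 'x) \<Rightarrow> real measure"
    and \<xi> :: "(nat \<Rightarrow> 'x) \<times> real \<Rightarrow> real"
    and w :: "nat \<Rightarrow> real"
    and \<mu> \<sigma> M \<epsilon> :: real
  assumes "1 \<le> k"
    and "k_partite_hypergraph k V n e"
    and "\<And>j. j < k \<Longrightarrow> compact (S j)"
    and "\<And>j. j < k \<Longrightarrow> sets (\<rho>j j) = sets (restrict_space borel (S j))"
    and "\<And>j. j < k \<Longrightarrow> prob_space (\<rho>j j)"
    and "K \<in> measurable (X_space k \<rho>j) (prob_algebra borel)"
    and "\<xi> \<in> borel_measurable (Z_space k \<rho>j)"
    and "\<mu> = (\<integral>z. \<xi> z \<partial>rho_joint k \<rho>j K)"
    and "\<sigma>\<^sup>2 = (\<integral>z. (\<xi> z - \<mu>)\<^sup>2 \<partial>rho_joint k \<rho>j K)"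
    and "AE z in rho_joint k \<rho>j K. \<bar>\<xi> z - \<mu>\<bar> \<le> M"
    and "optimal_weighting k V n e w"
    and "\<epsilon> > 0"
  shows "measure (networked_sample_law k V n e \<rho>j K)
           {zs \<in> space (networked_sample_law k V n e \<rho>j K).
              (1 / s_G k V n e) * (\<Sum>i<n. w i * \<xi> (zs i)) - \<mu> \<ge> \<epsilon>}
         \<le> exp (- (s_G k V n e * \<epsilon>\<^sup>2 / (2 * (\<sigma>\<^sup>2 + M * \<epsilon> / 3))))"
proof -
  note k = assms(1) and hg = assms(2) and rprob = assms(5) and Kmeas = assms(6)
    and \<xi>m = assms(7) and \<mu>def = assms(8) and \<sigma>def = assms(9) and AEb = assms(10)
    and opt = assms(11) and eps = assms(12)
  let ?\<rho> = "rho_joint k \<rho>j K"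
  let ?L = "networked_sample_law k V n e \<rho>j K"
  let ?s = "s_G k V n e"
  let ?Ev = "{zs \<in> space ?L. (1 / ?s) * (\<Sum>i<n. w i * \<xi> (zs i)) - \<mu> \<ge> \<epsilon>}"
  have fw: "feasible_weighting k V n e w" and ssum: "(\<Sum>i<n. w i) = ?s"
    using opt by (auto simp: optimal_weighting_def)
  have w0: "\<And>i. i < n \<Longrightarrow> 0 \<le> w i" using fw by (simp add: feasible_weighting_def)
  have s0: "0 \<le> ?s" unfolding ssum[symmetric] by (rule sum_nonneg) (simp add: w0)
  interpret R: prob_space ?\<rho> by (rule rho_prob[OF hg rprob Kmeas])
  interpret L: prob_space ?L by (rule L_prob[OF hg rprob Kmeas])
  have setsR: "sets ?\<rho> = sets (Z_space k \<rho>j)"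
    unfolding rho_joint_def
    by (rule sets_bind'[OF _ D_meas[OF hg rprob Kmeas]]) (simp add: space_prob_algebra X_prob[OF hg rprob Kmeas])
  have setsL: "sets ?L = sets (PiM {..<n} (\<lambda>_. Z_space k \<rho>j))"
    unfolding networked_sample_law_def
    by (rule sets_bind'[OF _ Nk_meas[OF hg rprob Kmeas]]) (simp add: space_prob_algebra Omega_prob[OF hg rprob Kmeas])
  have M0: "0 \<le> M"
  proof (rule ccontr)
    assume "\<not> 0 \<le> M"
    then have "AE z in ?\<rho>. False" using AEb by (rule_tac AE_mp[OF AEb]) auto
    then show False by (simp add: R.AE_False)
  qed
  have d0: "0 \<le> \<sigma>\<^sup>2 + M * \<epsilon> / 3" using M0 eps by simp
  show ?thesis
  proof (cases "0 < ?s \<and> 0 < \<sigma>\<^sup>2 + M * \<epsilon> / 3")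
    case False
    then have "?s = 0 \<or> \<sigma>\<^sup>2 + M * \<epsilon> / 3 = 0" using s0 d0 by linarith
    then have e1: "exp (- (?s * \<epsilon>\<^sup>2 / (2 * (\<sigma>\<^sup>2 + M * \<epsilon> / 3)))) = 1" by auto
    show ?thesis unfolding e1 by (rule L.prob_le_1)
  next
    case True
    then have sp: "0 < ?s" and dp: "0 < \<sigma>\<^sup>2 + M * \<epsilon> / 3" by auto
    define Yh where "Yh z = max (- M) (min M (\<xi> z - \<mu>))" for z
    have Ym: "Yh \<in> borel_measurable (Z_space k \<rho>j)" unfolding Yh_def using \<xi>m by measurable
    have YmR: "Yh \<in> borel_measurable ?\<rho>" using Ym setsR by (simp cong: measurable_cong_sets)
    have \<xi>mR: "\<xi> \<in> borel_measurable ?\<rho>" using \<xi>m setsR by (simp cong: measurable_cong_sets)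
    have Yb: "\<And>z. \<bar>Yh z\<bar> \<le> M" using M0 by (auto simp: Yh_def)
    have AEY: "AE z in ?\<rho>. Yh z = \<xi> z - \<mu>"
      by (rule AE_mp[OF AEb]) (auto intro!: AE_I2 simp: Yh_def)
    have iY: "integrable ?\<rho> Yh" by (rule integrable_bounded_prob[OF R.prob_space_axioms YmR Yb])
    have iXm: "integrable ?\<rho> (\<lambda>z. \<xi> z - \<mu>)"
      by (rule integrable_cong_AE_imp[OF iY _ AEY]) (use \<xi>mR in measurable)
    have iX: "integrable ?\<rho> \<xi>"
    proof -
      have "integrable ?\<rho> (\<lambda>z. (\<xi> z - \<mu>) + \<mu>)" by (rule Bochner_Integration.integrable_add[OF iXm]) simp
      then show ?thesis by simp
    qed
    have E0: "(\<integral>z. Yh z \<partial>?\<rho>) = 0"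
    proof -
      have "(\<integral>z. Yh z \<partial>?\<rho>) = (\<integral>z. \<xi> z - \<mu> \<partial>?\<rho>)"
        by (rule integral_cong_AE[OF YmR _ AEY]) (use \<xi>mR in measurable)
      also have "\<dots> = (\<integral>z. \<xi> z \<partial>?\<rho>) - \<mu>" using iX by (simp add: R.prob_space)
      finally show ?thesis using \<mu>def by simp
    qed
    have E2: "(\<integral>z. (Yh z)^2 \<partial>?\<rho>) = \<sigma>\<^sup>2"
    proof -
      have "(\<integral>z. (Yh z)^2 \<partial>?\<rho>) = (\<integral>z. (\<xi> z - \<mu>)^2 \<partial>?\<rho>)"
        by (rule integral_cong_AE) (use YmR \<xi>mR AEY in \<open>measurable, measurable, auto elim: AE_mp intro: AE_I2\<close>)
      then show ?thesis using \<sigma>def by simp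
    qed
    define d where "d = \<sigma>\<^sup>2 + M * \<epsilon> / 3"
    define tt where "tt = \<epsilon> / d"
    have tt0: "0 \<le> tt" using dp eps by (simp add: tt_def d_def)
    define m where "m = (\<integral>z. exp (tt * Yh z) \<partial>?\<rho>)"
    have iE: "integrable ?\<rho> (\<lambda>z. exp (tt * Yh z))"
    proof (rule integrable_bounded_prob[OF R.prob_space_axioms, where B="exp (tt * M)"])
      show "(\<lambda>z. exp (tt * Yh z)) \<in> borel_measurable ?\<rho>" using YmR by measurable
      fix z have "tt * Yh z \<le> tt * M" using Yb[of z] tt0 by (intro mult_left_mono) auto
      then show "\<bar>exp (tt * Yh z)\<bar> \<le> exp (tt * M)" by simp
    qed
    have m_pos: "0 < m"
    proof -
      have "exp (- (tt * M)) \<le> m" unfolding m_def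
      proof (rule R.integral_ge_const[OF iE], rule AE_I2)
        fix z have "- (tt * M) \<le> tt * Yh z"
          using Yb[of z] tt0 mult_left_mono[of "- M" "Yh z" tt] by simp
        then show "exp (- (tt * M)) \<le> exp (tt * Yh z)" by simp
      qed
      then show ?thesis by (smt (verit) exp_gt_zero)
    qed
    have mb1: "m \<le> 1 + tt^2 * \<sigma>\<^sup>2 / (2 * (1 - tt * M / 3))" if "0 < \<sigma>\<^sup>2"
      unfolding m_def
    proof (rule bern_mgf[OF R.prob_space_axioms YmR Yb E0 E2 tt0])
      have "\<epsilon> * M < 3 * d" using that eps by (simp add: d_def)
      moreover have dpos: "0 < d" using dp by (simp add: d_def)
      moreover have "tt * M = (\<epsilon> * M) / d" by (simp add: tt_def)
      ultimately show "tt * M < 3" by (simp add: pos_divide_less_eq)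
    qed
    have mb0: "m \<le> 1" if s20: "\<sigma>\<^sup>2 = 0"
    proof -
      have i2: "integrable ?\<rho> (\<lambda>z. (Yh z)^2)"
        by (rule integrable_bounded_prob[OF R.prob_space_axioms, where B="M^2"])
           (use YmR power_mono[OF Yb abs_ge_zero, of _ 2] in \<open>measurable, simp\<close>)
      have "AE z in ?\<rho>. (Yh z)^2 = 0"
        using integral_nonneg_eq_0_iff_AE[OF i2] E2 s20 by simp
      then have "AE z in ?\<rho>. exp (tt * Yh z) = 1" by (rule AE_mp) (auto intro!: AE_I2)
      moreover have "(\<lambda>z. exp (tt * Yh z)) \<in> borel_measurable ?\<rho>" using YmR by measurable
      ultimately have "m = (\<integral>z. 1 \<partial>?\<rho>)" unfolding m_def
        by (intro integral_cong_AE) auto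
      then show ?thesis by (simp add: R.prob_space)
    qed
    have fin: "exp (- ((\<epsilon> / (\<sigma>\<^sup>2 + M * \<epsilon> / 3)) * ?s * \<epsilon>)) * m powr ?s
        \<le> exp (- (?s * \<epsilon>^2 / (2 * (\<sigma>\<^sup>2 + M * \<epsilon> / 3))))"
      by (rule final_arith[OF sp eps M0 _ dp m_pos]) (use mb1 mb0 in \<open>simp_all add: tt_def d_def\<close>)
    have mgf: "(\<integral>zs. (\<Prod>i<n. exp (tt * w i * Yh (zs i))) \<partial>?L) \<le> m powr ?s"
      unfolding m_def ssum[symmetric] by (rule mgf_prod[OF hg rprob Kmeas Ym Yb tt0 k fw])
    define T where "T zs = (\<Sum>i<n. w i * Yh (zs i))" for zs
    let ?Ev' = "{zs \<in> space ?L. ?s * \<epsilon> \<le> T zs}"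
    have Tm: "T \<in> borel_measurable ?L"
    proof -
      have "T \<in> borel_measurable (PiM {..<n} (\<lambda>_. Z_space k \<rho>j))" unfolding T_def using Ym by measurable
      then show ?thesis using setsL by (simp cong: measurable_cong_sets)
    qed
    have Ev'm: "?Ev' \<in> sets ?L" using Tm by measurable
    have pq: "Measurable.pred (Z_space k \<rho>j) (\<lambda>z. Yh z = \<xi> z - \<mu>)" using Ym \<xi>m by measurable
    have AEL: "AE zs in ?L. \<forall>i<n. Yh (zs i) = \<xi> (zs i) - \<mu>"
      by (rule AE_transfer[OF hg rprob Kmeas pq AEY])
    have incl: "AE zs in ?L. zs \<in> ?Ev \<longrightarrow> zs \<in> ?Ev'"
    proof (rule AE_mp[OF AEL], rule AE_I2, intro impI)
      fix zs assume h: "\<forall>i<n. Yh (zs i) = \<xi> (zs i) - \<mu>" and zs: "zs \<in> ?Ev"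
      have "T zs = (\<Sum>i<n. w i * \<xi> (zs i)) - \<mu> * ?s"
        unfolding T_def ssum[symmetric] using h
        by (simp add: sum_subtractf sum_distrib_left right_diff_distrib mult.commute)
      moreover have "?s * \<epsilon> \<le> (\<Sum>i<n. w i * \<xi> (zs i)) - \<mu> * ?s"
      proof -
        have "\<epsilon> \<le> (1 / ?s) * (\<Sum>i<n. w i * \<xi> (zs i)) - \<mu>" using zs by simp
        then have "?s * \<epsilon> \<le> ?s * ((1 / ?s) * (\<Sum>i<n. w i * \<xi> (zs i)) - \<mu>)"
          by (rule mult_left_mono) (use sp in simp)
        then show ?thesis using sp by (simp add: right_diff_distrib mult.commute)
      qed
      ultimately show "zs \<in> ?Ev'" using zs by simp
    qed
    have "measure ?L ?Ev \<le> measure ?L ?Ev'" by (rule L.finite_measure_mono_AE[OF incl Ev'm])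
    also have "\<dots> = (\<integral>zs. indicator ?Ev' zs \<partial>?L)" using Ev'm by simp
    also have "\<dots> \<le> (\<integral>zs. exp (tt * (T zs - ?s * \<epsilon>)) \<partial>?L)"
    proof (rule integral_mono)
      show "integrable ?L (indicator ?Ev' :: _ \<Rightarrow> real)"
        using Ev'm by (intro integrable_real_indicator) (auto simp: less_top[symmetric] L.emeasure_finite)
      show "integrable ?L (\<lambda>zs. exp (tt * (T zs - ?s * \<epsilon>)))"
      proof (rule integrable_bounded_prob[OF L.prob_space_axioms, where B="exp (tt * (M * ?s))"])
        show "(\<lambda>zs. exp (tt * (T zs - ?s * \<epsilon>))) \<in> borel_measurable ?L" using Tm by measurable
        fix zs
        have "T zs \<le> (\<Sum>i<n. w i * M)" unfolding T_def
          by (rule sum_mono) (use w0 in \<open>auto intro!: mult_left_mono abs_le_D1[OF Yb]\<close>)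
        also have "\<dots> = M * ?s" by (simp add: ssum[symmetric] sum_distrib_left mult.commute)
        finally have "T zs - ?s * \<epsilon> \<le> M * ?s" using sp eps by (smt (verit) mult_pos_pos)
        then have "tt * (T zs - ?s * \<epsilon>) \<le> tt * (M * ?s)" using tt0 by (rule mult_left_mono)
        then show "\<bar>exp (tt * (T zs - ?s * \<epsilon>))\<bar> \<le> exp (tt * (M * ?s))" by simp
      qed
      fix zs
      show "indicator ?Ev' zs \<le> exp (tt * (T zs - ?s * \<epsilon>))"
      proof (cases "zs \<in> ?Ev'")
        case True
        then have "0 \<le> tt * (T zs - ?s * \<epsilon>)" using tt0 by simp
        then show ?thesis using True by simp
      next
        case False then show ?thesis by simp
      qed
    qed
    also have "\<dots> = (\<integral>zs. exp (- (tt * ?s * \<epsilon>)) * (\<Prod>i<n. exp (tt * w i * Yh (zs i))) \<partial>?L)"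
    proof (rule Bochner_Integration.integral_cong[OF refl])
      fix zs
      have "tt * (T zs - ?s * \<epsilon>) = - (tt * ?s * \<epsilon>) + (\<Sum>i<n. tt * w i * Yh (zs i))"
        unfolding T_def by (simp add: sum_distrib_left right_diff_distrib mult.assoc)
      then show "exp (tt * (T zs - ?s * \<epsilon>)) = exp (- (tt * ?s * \<epsilon>)) * (\<Prod>i<n. exp (tt * w i * Yh (zs i)))"
        by (simp only: exp_add exp_sum[OF finite_lessThan])
    qed
    also have "\<dots> = exp (- (tt * ?s * \<epsilon>)) * (\<integral>zs. (\<Prod>i<n. exp (tt * w i * Yh (zs i))) \<partial>?L)"
      by simp
    also have "\<dots> \<le> exp (- (tt * ?s * \<epsilon>)) * m powr ?s"
      by (rule mult_left_mono[OF mgf]) simp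
    also have "\<dots> \<le> exp (- (?s * \<epsilon>^2 / (2 * (\<sigma>\<^sup>2 + M * \<epsilon> / 3))))"
      using fin by (simp add: tt_def d_def)
    finally show ?thesis .
  qed
qed

end
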